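(* Let $\mathcal{C}$ be an additive category, $\mathbb{E}:\mathcal{C}^{\mathrm{op}}\times\mathcal{C}\to\mathrm{Ab}$ a biadditive functor, and $\mathcal{I}$ an ideal of $\mathcal{C}$. Then $\mathcal{I}^\star$ is an additive subfunctor of $\mathbb{E}$ satisfying $\mathcal{I}\subseteq\mathrm{Ph}(\mathcal{I}^\star)$, and it is minimal with this property: for every additive subfunctor $\mathbb{F}\subseteq\mathbb{E}$ with $\mathcal{I}\subseteq\mathrm{Ph}(\mathbb{F})$ one has $\mathcal{I}^\star\subseteq\mathbb{F}$.
   Context: For $\delta\in\mathbb{E}(C,A)$, $a\in\mathcal{C}(A,A')$, $c\in\mathcal{C}(C',C)$ write $a_\star\delta:=\mathbb{E}(C,a)(\delta)\in\mathbb{E}(C,A')$ and $c^\star\delta:=\mathbb{E}(c,A)(\delta)\in\mathbb{E}(C',A)$. An ideal of $\mathcal{C}$ is a class of morphisms containing all zero morphisms, closed under sums of parallel morphisms and under composition on either side with arbitrary morphisms. An additive subfunctor $\mathbb{F}\subseteq\mathbb{E}$ is a choice of subgroups $\mathbb{F}(C,A)\subseteq\mathbb{E}(C,A)$ stable under all $a_\star$ and $c^\star$. A morphism $\varphi\in\mathcal{C}(X,C)$ is $\mathbb{F}$-phantom if $\varphi^\star\delta\in\mathbb{F}(X,A)$ for every object $A$ and every $\delta\in\mathbb{E}(C,A)$; $\mathrm{Ph}(\mathbb{F})$ denotes the class of $\mathbb{F}$-phantom morphisms. For an ideal $\mathcal{I}$, $\mathcal{I}^\star$ is given by $\mathcal{I}^\star(X,A)=\{i^\star\delta\mid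 C\in\mathcal{C},\ i\in\mathcal{I}(X,C),\ \delta\in\mathbb{E}(C,A)\}$. *)

theory Defs
  imports "HOL-Algebra.Group"
begin

text \<open>Hom X Y is the additive group C(X,Y) (written multiplicatively in HOL-Algebra:
  the group operation is the sum, the unit is the zero morphism).
  cmp X Y Z g f is the composite g o f of f : X -> Y and g : Y -> Z.\<close>

record ('o, 'm) precat =
  Hom :: "'o \<Rightarrow> 'o \<Rightarrow> 'm monoid"
  cmp :: "'o \<Rightarrow> 'o \<Rightarrow> 'o \<Rightarrow> 'm \<Rightarrow> 'm \<Rightarrow> 'm"
  idm :: "'o \<Rightarrow> 'm"

abbreviation mor :: "('o, 'm) precat \<Rightarrow> 'o \<Rightarrow> 'o \<Rightarrow> 'm set" where
  "mor C X Y \<equiv> carrier (Hom C X Y)"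

abbreviation zmor :: "('o, 'm) precat \<Rightarrow> 'o \<Rightarrow> 'o \<Rightarrow> 'm" where
  "zmor C X Y \<equiv> \<one>\<^bsub>Hom C X Y\<^esub>"

abbreviation addm :: "('o, 'm) precat \<Rightarrow> 'o \<Rightarrow> 'o \<Rightarrow> 'm \<Rightarrow> 'm \<Rightarrow> 'm" where
  "addm C X Y f g \<equiv> f \<otimes>\<^bsub>Hom C X Y\<^esub> g"

definition additive_category :: "('o, 'm) precat \<Rightarrow> bool" where
  "additive_category C \<longleftrightarrow>
     (\<forall>X Y. comm_group (Hom C X Y)) \<and>
     (\<forall>X Y Z f g. f \<in> mor C X Y \<longrightarrow> g \<in> mor C Y Z \<longrightarrow> cmp C X Y Z g f \<in> mor C X Z) \<and>
     (\<forall>W X Y Z f g h. f \<in> mor C W X \<longrightarrow> g \<in> mor C X Y \<longrightarrow> h \<in> mor C Y Z \<longrightarrow>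
        cmp C W Y Z h (cmp C W X Y g f) = cmp C W X Z (cmp C X Y Z h g) f) \<and>
     (\<forall>X. idm C X \<in> mor C X X) \<and>
     (\<forall>X Y f. f \<in> mor C X Y \<longrightarrow> cmp C X X Y f (idm C X) = f \<and> cmp C X Y Y (idm C Y) f = f) \<and>
     (\<forall>X Y Z f g g'. f \<in> mor C X Y \<longrightarrow> g \<in> mor C Y Z \<longrightarrow> g' \<in> mor C Y Z \<longrightarrow>
        cmp C X Y Z (addm C Y Z g g') f = addm C X Z (cmp C X Y Z g f) (cmp C X Y Z g' f)) \<and>
     (\<forall>X Y Z f f' g. f \<in> mor C X Y \<longrightarrow> f' \<in> mor C X Y \<longrightarrow> g \<in> mor C Y Z \<longrightarrow>
        cmp C X Y Z g (addm C X Y f f') = addm C X Z (cmp C X Y Z g f) (cmp C X Y Z g f')) \<and>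
     \<comment> \<open>zero object\<close>
     (\<exists>Z0. \<forall>X. mor C Z0 X = {zmor C Z0 X} \<and> mor C X Z0 = {zmor C X Z0}) \<and>
     \<comment> \<open>binary biproducts\<close>
     (\<forall>A B. \<exists>S p1 p2 i1 i2.
        p1 \<in> mor C S A \<and> p2 \<in> mor C S B \<and> i1 \<in> mor C A S \<and> i2 \<in> mor C B S \<and>
        cmp C A S A p1 i1 = idm C A \<and> cmp C B S B p2 i2 = idm C B \<and>
        cmp C A S B p2 i1 = zmor C A B \<and> cmp C B S A p1 i2 = zmor C B A \<and>
        addm C S S (cmp C S A S i1 p1) (cmp C S B S i2 p2) = idm C S)"

text \<open>A bifunctor E : C^op x C -> Ab.  EG E C A is the abelian group E(C,A);
  cov E C A A' a d is a_* d (for a : A -> A', d in E(C,A));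
  con E C' C A c d is c^* d (for c : C' -> C, d in E(C,A)).\<close>

record ('o, 'm, 'e) bifun =
  EG :: "'o \<Rightarrow> 'o \<Rightarrow> 'e monoid"
  cov :: "'o \<Rightarrow> 'o \<Rightarrow> 'o \<Rightarrow> 'm \<Rightarrow> 'e \<Rightarrow> 'e"
  con :: "'o \<Rightarrow> 'o \<Rightarrow> 'o \<Rightarrow> 'm \<Rightarrow> 'e \<Rightarrow> 'e"

abbreviation Eel :: "('o, 'm, 'e) bifun \<Rightarrow> 'o \<Rightarrow> 'o \<Rightarrow> 'e set" where
  "Eel E C A \<equiv> carrier (EG E C A)"

definition biadditive_functor :: "('o, 'm) precat \<Rightarrow> ('o, 'm, 'e) bifun \<Rightarrow> bool" where
  "biadditive_functor C E \<longleftrightarrow>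
     (\<forall>X A. comm_group (EG E X A)) \<and>
     \<comment> \<open>each a_* and c^* is a group homomorphism\<close>
     (\<forall>X A A' a. a \<in> mor C A A' \<longrightarrow> cov E X A A' a \<in> hom (EG E X A) (EG E X A')) \<and>
     (\<forall>X' X A c. c \<in> mor C X' X \<longrightarrow> con E X' X A c \<in> hom (EG E X A) (EG E X' A)) \<and>
     \<comment> \<open>functoriality in the covariant variable\<close>
     (\<forall>X A d. d \<in> Eel E X A \<longrightarrow> cov E X A A (idm C A) d = d) \<and>
     (\<forall>X A A' A'' a b d. a \<in> mor C A A' \<longrightarrow> b \<in> mor C A' A'' \<longrightarrow> d \<in> Eel E X A \<longrightarrow>
        cov E X A A'' (cmp C A A' A'' b a) d = cov E X A' A'' b (cov E X A A' a d)) \<and>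
     \<comment> \<open>functoriality in the contravariant variable\<close>
     (\<forall>X A d. d \<in> Eel E X A \<longrightarrow> con E X X A (idm C X) d = d) \<and>
     (\<forall>X'' X' X A c c' d. c' \<in> mor C X'' X' \<longrightarrow> c \<in> mor C X' X \<longrightarrow> d \<in> Eel E X A \<longrightarrow>
        con E X'' X A (cmp C X'' X' X c c') d = con E X'' X' A c' (con E X' X A c d)) \<and>
     \<comment> \<open>bifunctoriality\<close>
     (\<forall>X' X A A' c a d. c \<in> mor C X' X \<longrightarrow> a \<in> mor C A A' \<longrightarrow> d \<in> Eel E X A \<longrightarrow>
        cov E X' A A' a (con E X' X A c d) = con E X' X A' c (cov E X A A' a d)) \<and>
     \<comment> \<open>additivity on morphisms\<close>
     (\<forall>X A A' a b d. a \<in> mor C A A' \<longrightarrow> b \<in> mor C A A' \<longrightarrow> d \<in> Eel E X A \<longrightarrow>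
        cov E X A A' (addm C A A' a b) d = cov E X A A' a d \<otimes>\<^bsub>EG E X A'\<^esub> cov E X A A' b d) \<and>
     (\<forall>X' X A c c' d. c \<in> mor C X' X \<longrightarrow> c' \<in> mor C X' X \<longrightarrow> d \<in> Eel E X A \<longrightarrow>
        con E X' X A (addm C X' X c c') d = con E X' X A c d \<otimes>\<^bsub>EG E X' A\<^esub> con E X' X A c' d)"

definition ideal_of :: "('o, 'm) precat \<Rightarrow> ('o \<Rightarrow> 'o \<Rightarrow> 'm set) \<Rightarrow> bool" where
  "ideal_of C I \<longleftrightarrow>
     (\<forall>X Y. I X Y \<subseteq> mor C X Y) \<and>
     (\<forall>X Y. zmor C X Y \<in> I X Y) \<and>
     (\<forall>X Y f g. f \<in> I X Y \<longrightarrow> g \<in> I X Y \<longrightarrow> addm C X Y f g \<in> I X Y) \<and>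
     (\<forall>W X Y f g. f \<in> I X Y \<longrightarrow> g \<in> mor C W X \<longrightarrow> cmp C W X Y f g \<in> I W Y) \<and>
     (\<forall>X Y Z f h. f \<in> I X Y \<longrightarrow> h \<in> mor C Y Z \<longrightarrow> cmp C X Y Z h f \<in> I X Z)"

definition additive_subfunctor ::
  "('o, 'm) precat \<Rightarrow> ('o, 'm, 'e) bifun \<Rightarrow> ('o \<Rightarrow> 'o \<Rightarrow> 'e set) \<Rightarrow> bool" where
  "additive_subfunctor C E F \<longleftrightarrow>
     (\<forall>X A. subgroup (F X A) (EG E X A)) \<and>
     (\<forall>X A A' a d. a \<in> mor C A A' \<longrightarrow> d \<in> F X A \<longrightarrow> cov E X A A' a d \<in> F X A') \<and>
     (\<forall>X' X A c d. c \<in> mor C X' X \<longrightarrow> d \<in> F X A \<longrightarrow> con E X' X A c d \<in> F X' A)"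

definition Ph ::
  "('o, 'm) precat \<Rightarrow> ('o, 'm, 'e) bifun \<Rightarrow> ('o \<Rightarrow> 'o \<Rightarrow> 'e set) \<Rightarrow> 'o \<Rightarrow> 'o \<Rightarrow> 'm set" where
  "Ph C E F X Y = {\<phi> \<in> mor C X Y. \<forall>A d. d \<in> Eel E Y A \<longrightarrow> con E X Y A \<phi> d \<in> F X A}"

definition Istar ::
  "('o, 'm) precat \<Rightarrow> ('o, 'm, 'e) bifun \<Rightarrow> ('o \<Rightarrow> 'o \<Rightarrow> 'm set) \<Rightarrow> 'o \<Rightarrow> 'o \<Rightarrow> 'e set" where
  "Istar C E I X A = {con E X Y A i d | Y i d. i \<in> I X Y \<and> d \<in> Eel E Y A}"

end

theory Submission
  imports Defs
begin

lemma con_zero: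
  assumes AC: "additive_category C" and BF: "biadditive_functor C E"
    and d: "d \<in> Eel E X A"
  shows "con E X' X A (zmor C X' X) d = \<one>\<^bsub>EG E X' A\<^esub>"
proof -
  have gH: "group (Hom C X' X)" using AC unfolding additive_category_def by (meson comm_group.axioms(2))
  have gE: "group (EG E X' A)" using BF unfolding biadditive_functor_def by (meson comm_group.axioms(2))
  have z: "zmor C X' X \<in> mor C X' X" using gH by (simp add: group.is_monoid monoid.one_closed)
  have h: "con E X' X A (zmor C X' X) \<in> hom (EG E X A) (EG E X' A)"
    using BF z unfolding biadditive_functor_def by meson
  let ?x = "con E X' X A (zmor C X' X) d"
  have xc: "?x \<in> Eel E X' A" using h d by (auto simp: hom_def Pi_def)
  have "con E X' X A (addm C X' X (zmor C X' X) (zmor C X' X)) d = ?x \<otimes>\<^bsub>EG E X' A\<^esub> ?x"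
    using BF z d unfolding biadditive_functor_def by meson
  moreover have "addm C X' X (zmor C X' X) (zmor C X' X) = zmor C X' X"
    using gH z by (simp add: group.is_monoid monoid.l_one)
  ultimately have "?x \<otimes>\<^bsub>EG E X' A\<^esub> ?x = ?x"
    by simp
  then show ?thesis using gE xc
    by (simp add: group.l_cancel_one)
qed

theorem proposition3p2:
  fixes C :: "('o, 'm) precat" and E :: "('o, 'm, 'e) bifun" and I :: "'o \<Rightarrow> 'o \<Rightarrow> 'm set"
  assumes "additive_category C" and "biadditive_functor C E" and "ideal_of C I"
  shows "additive_subfunctor C E (Istar C E I)
    \<and> (\<forall>X Y. I X Y \<subseteq> Ph C E (Istar C E I) X Y)
    \<and> (\<forall>F. additive_subfunctor C E F \<and> (\<forall>X Y. I X Y \<subseteq> Ph C E F X Y)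
           \<longrightarrow> (\<forall>X A. Istar C E I X A \<subseteq> F X A))"
proof -
  note AC = assms(1) and BF = assms(2) and ID = assms(3)
  have gH: "\<And>X Y. group (Hom C X Y)" using AC unfolding additive_category_def by (meson comm_group.axioms(2))
  have gE: "\<And>X A. group (EG E X A)" using BF unfolding biadditive_functor_def by (meson comm_group.axioms(2))
  have cmpc: "\<And>X Y Z f g. f \<in> mor C X Y \<Longrightarrow> g \<in> mor C Y Z \<Longrightarrow> cmp C X Y Z g f \<in> mor C X Z"
    using AC unfolding additive_category_def by meson
  have conh: "\<And>X' X A c. c \<in> mor C X' X \<Longrightarrow> con E X' X A c \<in> hom (EG E X A) (EG E X' A)"
    using BF unfolding biadditive_functor_def by meson
  have covh: "\<And>X A A' a. a \<in> mor C A A' \<Longrightarrow> cov E X A A' a \<in> hom (EG E X A) (EG E X A')"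
    using BF unfolding biadditive_functor_def by meson
  have conc: "\<And>X' X A c d. c \<in> mor C X' X \<Longrightarrow> d \<in> Eel E X A \<Longrightarrow> con E X' X A c d \<in> Eel E X' A"
    using conh by (auto simp: hom_def Pi_def)
  have covc: "\<And>X A A' a d. a \<in> mor C A A' \<Longrightarrow> d \<in> Eel E X A \<Longrightarrow> cov E X A A' a d \<in> Eel E X A'"
    using covh by (auto simp: hom_def Pi_def)
  have conmul: "\<And>X' X A c d e. c \<in> mor C X' X \<Longrightarrow> d \<in> Eel E X A \<Longrightarrow> e \<in> Eel E X A \<Longrightarrow>
     con E X' X A c (d \<otimes>\<^bsub>EG E X A\<^esub> e) = con E X' X A c d \<otimes>\<^bsub>EG E X' A\<^esub> con E X' X A c e"
    using conh by (auto simp: hom_def)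
  have conid: "\<And>X A d. d \<in> Eel E X A \<Longrightarrow> con E X X A (idm C X) d = d"
    using BF unfolding biadditive_functor_def by meson
  have concmp: "\<And>X'' X' X A c c' d. c' \<in> mor C X'' X' \<Longrightarrow> c \<in> mor C X' X \<Longrightarrow> d \<in> Eel E X A \<Longrightarrow>
        con E X'' X A (cmp C X'' X' X c c') d = con E X'' X' A c' (con E X' X A c d)"
    using BF unfolding biadditive_functor_def by meson
  have bif: "\<And>X' X A A' c a d. c \<in> mor C X' X \<Longrightarrow> a \<in> mor C A A' \<Longrightarrow> d \<in> Eel E X A \<Longrightarrow>
        cov E X' A A' a (con E X' X A c d) = con E X' X A' c (cov E X A A' a d)"
    using BF unfolding biadditive_functor_def by meson
  have conadd: "\<And>X' X A c c' d. c \<in> mor C X' X \<Longrightarrow> c' \<in> mor C X' X \<Longrightarrow> d \<in> Eel E X A \<Longrightarrow>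
        con E X' X A (addm C X' X c c') d = con E X' X A c d \<otimes>\<^bsub>EG E X' A\<^esub> con E X' X A c' d"
    using BF unfolding biadditive_functor_def by meson
  have Isub: "\<And>X Y. I X Y \<subseteq> mor C X Y" using ID unfolding ideal_of_def by meson
  have Iz: "\<And>X Y. zmor C X Y \<in> I X Y" using ID unfolding ideal_of_def by meson
  have Iadd: "\<And>X Y f g. f \<in> I X Y \<Longrightarrow> g \<in> I X Y \<Longrightarrow> addm C X Y f g \<in> I X Y"
    using ID unfolding ideal_of_def by meson
  have Ir: "\<And>W X Y f g. f \<in> I X Y \<Longrightarrow> g \<in> mor C W X \<Longrightarrow> cmp C W X Y f g \<in> I W Y"
    using ID unfolding ideal_of_def by meson
  have Il: "\<And>X Y Z f h. f \<in> I X Y \<Longrightarrow> h \<in> mor C Y Z \<Longrightarrow> cmp C X Y Z h f \<in> I X Z"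
    using ID unfolding ideal_of_def by meson
  have bip: "\<And>A B. \<exists>S p1 p2 i1 i2.
        p1 \<in> mor C S A \<and> p2 \<in> mor C S B \<and> i1 \<in> mor C A S \<and> i2 \<in> mor C B S \<and>
        cmp C A S A p1 i1 = idm C A \<and> cmp C B S B p2 i2 = idm C B \<and>
        cmp C A S B p2 i1 = zmor C A B \<and> cmp C B S A p1 i2 = zmor C B A"
    using AC unfolding additive_category_def by meson
  let ?S = "Istar C E I"
  have sub: "subgroup (?S X A) (EG E X A)" for X A
  proof
    show "?S X A \<subseteq> Eel E X A" unfolding Istar_def using conc Isub by blast
  next
    have "con E X X A (zmor C X X) \<one>\<^bsub>EG E X A\<^esub> \<in> ?S X A"
      unfolding Istar_def using Iz gE by (blast intro: monoid.one_closed group.is_monoid)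
    then show "\<one>\<^bsub>EG E X A\<^esub> \<in> ?S X A"
      using con_zero[OF AC BF] gE by (metis monoid.one_closed group.is_monoid)
  next
    fix x assume "x \<in> ?S X A"
    then obtain Y i d where x: "x = con E X Y A i d" and i: "i \<in> I X Y" and d: "d \<in> Eel E Y A"
      unfolding Istar_def by blast
    have "inv\<^bsub>EG E X A\<^esub> x = con E X Y A i (inv\<^bsub>EG E Y A\<^esub> d)"
    proof -
      have "group_hom (EG E Y A) (EG E X A) (con E X Y A i)"
        unfolding group_hom_def group_hom_axioms_def using gE conh[of i] i Isub by blast
      then show ?thesis using x d by (simp add: group_hom.hom_inv)
    qed
    moreover have "inv\<^bsub>EG E Y A\<^esub> d \<in> Eel E Y A" using gE d by (simp add: group.inv_closed)
    ultimately show "inv\<^bsub>EG E X A\<^esub> x \<in> ?S X A" unfolding Istar_def using i by blast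
  next
    fix x y assume "x \<in> ?S X A" "y \<in> ?S X A"
    then obtain Y i d Y' i' d' where x: "x = con E X Y A i d" and i: "i \<in> I X Y" and d: "d \<in> Eel E Y A"
      and y: "y = con E X Y' A i' d'" and i': "i' \<in> I X Y'" and d': "d' \<in> Eel E Y' A"
      unfolding Istar_def by blast
    obtain S p1 p2 j1 j2 where p1: "p1 \<in> mor C S Y" and p2: "p2 \<in> mor C S Y'"
      and j1: "j1 \<in> mor C Y S" and j2: "j2 \<in> mor C Y' S"
      and e11: "cmp C Y S Y p1 j1 = idm C Y" and e22: "cmp C Y' S Y' p2 j2 = idm C Y'"
      and e12: "cmp C Y S Y' p2 j1 = zmor C Y Y'" and e21: "cmp C Y' S Y p1 j2 = zmor C Y' Y"
      using bip[of Y Y'] by blast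
    have im: "i \<in> mor C X Y" "i' \<in> mor C X Y'" using i i' Isub by auto
    define k where "k = addm C X S (cmp C X Y S j1 i) (cmp C X Y' S j2 i')"
    define e where "e = con E S Y A p1 d \<otimes>\<^bsub>EG E S A\<^esub> con E S Y' A p2 d'"
    have k: "k \<in> I X S" unfolding k_def using Iadd Il i i' j1 j2 by blast
    have a: "con E S Y A p1 d \<in> Eel E S A" "con E S Y' A p2 d' \<in> Eel E S A"
      using conc p1 p2 d d' by auto
    have ec: "e \<in> Eel E S A" unfolding e_def using a gE by (simp add: monoid.m_closed group.is_monoid)
    have r1: "con E Y S A j1 e = d"
    proof -
      have "con E Y S A j1 e = con E Y S A j1 (con E S Y A p1 d) \<otimes>\<^bsub>EG E Y A\<^esub> con E Y S A j1 (con E S Y' A p2 d')"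
        unfolding e_def using conmul j1 a by blast
      also have "con E Y S A j1 (con E S Y A p1 d) = d"
        using concmp[OF j1 p1 d] e11 conid d by simp
      also have "con E Y S A j1 (con E S Y' A p2 d') = \<one>\<^bsub>EG E Y A\<^esub>"
        using concmp[OF j1 p2 d'] e12 con_zero[OF AC BF d'] by simp
      finally show ?thesis using gE d by (simp add: monoid.r_one group.is_monoid)
    qed
    have r2: "con E Y' S A j2 e = d'"
    proof -
      have "con E Y' S A j2 e = con E Y' S A j2 (con E S Y A p1 d) \<otimes>\<^bsub>EG E Y' A\<^esub> con E Y' S A j2 (con E S Y' A p2 d')"
        unfolding e_def using conmul j2 a by blast
      also have "con E Y' S A j2 (con E S Y A p1 d) = \<one>\<^bsub>EG E Y' A\<^esub>"
        using concmp[OF j2 p1 d] e21 con_zero[OF AC BF d] by simp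
      also have "con E Y' S A j2 (con E S Y' A p2 d') = d'"
        using concmp[OF j2 p2 d'] e22 conid d' by simp
      finally show ?thesis using gE d' by (simp add: monoid.l_one group.is_monoid)
    qed
    have "con E X S A k e = con E X S A (cmp C X Y S j1 i) e \<otimes>\<^bsub>EG E X A\<^esub> con E X S A (cmp C X Y' S j2 i') e"
      unfolding k_def using conadd cmpc im j1 j2 ec by blast
    also have "\<dots> = x \<otimes>\<^bsub>EG E X A\<^esub> y"
      using concmp[OF im(1) j1 ec] concmp[OF im(2) j2 ec] r1 r2 x y by simp
    finally show "x \<otimes>\<^bsub>EG E X A\<^esub> y \<in> ?S X A" unfolding Istar_def using k ec by (metis (mono_tags, lifting) mem_Collect_eq)
  qed
  have cov: "cov E X A A' a x \<in> ?S X A'" if a: "a \<in> mor C A A'" and x: "x \<in> ?S X A" for X A A' a x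
  proof -
    obtain Y i d where x: "x = con E X Y A i d" and i: "i \<in> I X Y" and d: "d \<in> Eel E Y A"
      using x unfolding Istar_def by blast
    have "cov E X A A' a x = con E X Y A' i (cov E Y A A' a d)" using bif i Isub a d x by blast
    then show ?thesis unfolding Istar_def using i covc a d by blast
  qed
  have con: "con E X' X A c x \<in> ?S X' A" if c: "c \<in> mor C X' X" and x: "x \<in> ?S X A" for X' X A c x
  proof -
    obtain Y i d where x: "x = con E X Y A i d" and i: "i \<in> I X Y" and d: "d \<in> Eel E Y A"
      using x unfolding Istar_def by blast
    have "con E X' X A c x = con E X' Y A (cmp C X' X Y i c) d" proof -
      have "i \<in> mor C X Y" using i Isub by blast
      from concmp[OF c this d] show ?thesis using x by simp
    qed
    then show ?thesis unfolding Istar_def using Ir i c d by blast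
  qed
  have P1: "additive_subfunctor C E ?S"
    unfolding additive_subfunctor_def using sub cov con by blast
  have P2: "\<forall>X Y. I X Y \<subseteq> Ph C E ?S X Y"
    unfolding Ph_def Istar_def using Isub by blast
  have P3: "\<forall>F. additive_subfunctor C E F \<and> (\<forall>X Y. I X Y \<subseteq> Ph C E F X Y)
           \<longrightarrow> (\<forall>X A. ?S X A \<subseteq> F X A)"
    unfolding Ph_def Istar_def by blast
  show ?thesis using P1 P2 P3 by blast
qed

end
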